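(* Fix an integer $q\geq 3$ and let $\gamma\in[0,q-1)$ and $\kappa\in[0,\frac{q-1}{q})$. Then for a small $\epsilon\in(0,1)$ and all sufficiently large $n$, with probability at least $1-q^{-n}$, a random insdel code $\mathcal{C}\subseteq\Sigma_q^n$ of rate $$R=1-(2\gamma-\kappa+1)H_q\!\left(\frac{\gamma}{2\gamma-\kappa+1}\right)+\gamma\log_q(q-1)-H_q(\kappa)-\epsilon$$ is list decodable against $\gamma n$ insertions and $\kappa n$ deletions with list size $O(1/\epsilon)$.
   Context: $\Sigma_q$ is a finite alphabet of size $q$. A code $\mathcal{C}\subseteq\Sigma_q^n$ is list decodable against $\gamma n$ insertions and $\kappa n$ deletions with list size $L$ if for every word $\mathbf r$ (of any length) there are at most $L$ codewords $\mathbf c\in\mathcal{C}$ such that $\mathbf r$ can be obtained from $\mathbf c$ by at most $\gamma n$ single-symbol insertions and at most $\kappa n$ single-symbol deletions. The rate of $\mathcal{C}$ is $\log_q|\mathcal{C}|/n$. A random insdel code of rate $R$ is a subset of $\Sigma_q^n$ of size $q^{Rn}$ chosen uniformly at random. $H_q(x)=x\log_q(q-1)-x\log_q x-(1-x)\log_q(1-x)$ for $0<x<1$, with $H_q(0)=H_q(1)=0$. *)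

theory Defs
  imports Complex_Main
begin

text \<open>Alphabet Sigma_q = {0..<q}; words are lists of naturals.\<close>

definition words :: "nat \<Rightarrow> nat \<Rightarrow> nat list set" where
  "words q n = {w. length w = n \<and> set w \<subseteq> {0..<q}}"

definition Hq :: "nat \<Rightarrow> real \<Rightarrow> real" where
  "Hq q x = (if 0 < x \<and> x < 1 then
      x * log q (real q - 1) - x * log q x - (1 - x) * log q (1 - x) else 0)"

definition one_del :: "'a list \<Rightarrow> 'a list \<Rightarrow> bool" where
  "one_del u v = (\<exists>i < length u. v = take i u @ drop (Suc i) u)"

definition one_ins :: "'a list \<Rightarrow> 'a list \<Rightarrow> bool" where
  "one_ins u v = one_del v u"

inductive insdel :: "nat \<Rightarrow> nat \<Rightarrow> 'a list \<Rightarrow> 'a list \<Rightarrow> bool" where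
  refl: "insdel a b c c"
| ins: "insdel a b c r \<Longrightarrow> one_ins r r' \<Longrightarrow> insdel (Suc a) b c r'"
| del: "insdel a b c r \<Longrightarrow> one_del r r' \<Longrightarrow> insdel a (Suc b) c r'"

definition list_decodable_insdel ::
  "nat \<Rightarrow> nat \<Rightarrow> real \<Rightarrow> real \<Rightarrow> real \<Rightarrow> nat list set \<Rightarrow> bool" where
  "list_decodable_insdel q n \<gamma> \<kappa> L C =
     (\<forall>r. set r \<subseteq> {0..<q} \<longrightarrow>
        real (card {c \<in> C. insdel (nat \<lfloor>\<gamma> * real n\<rfloor>) (nat \<lfloor>\<kappa> * real n\<rfloor>) c r}) \<le> L)"

text \<open>Random code of rate R: uniform over subsets of Sigma_q^n of size floor(q^(R n)).\<close>
definition random_codes :: "nat \<Rightarrow> nat \<Rightarrow> real \<Rightarrow> nat list set set" where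
  "random_codes q n R = {C. C \<subseteq> words q n \<and> card C = nat \<lfloor>real q powr (R * real n)\<rfloor>}"

definition prob_random_code :: "nat \<Rightarrow> nat \<Rightarrow> real \<Rightarrow> (nat list set \<Rightarrow> bool) \<Rightarrow> real" where
  "prob_random_code q n R P =
     real (card {C \<in> random_codes q n R. P C}) / real (card (random_codes q n R))"

definition insdel_rate :: "nat \<Rightarrow> real \<Rightarrow> real \<Rightarrow> real \<Rightarrow> real" where
  "insdel_rate q \<gamma> \<kappa> \<epsilon> =
     1 - (2*\<gamma> - \<kappa> + 1) * Hq q (\<gamma> / (2*\<gamma> - \<kappa> + 1)) + \<gamma> * log q (real q - 1)
       - Hq q \<kappa> - \<epsilon>"

end

theory Submission
  imports Defs "HOL-Library.Sublist"
begin


lemma del_subseq: "subseq (take i u @ drop (Suc i) u) u"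
proof (cases "i < length u")
  case True
  have "u = take i u @ (u!i) # drop (Suc i) u" using True by (simp add: Cons_nth_drop_Suc)
  moreover have "subseq (take i u @ drop (Suc i) u) (take i u @ (u!i) # drop (Suc i) u)"
    by (simp add: subseq_append' list_emb_Cons list_emb_refl)
  ultimately show ?thesis by metis
next
  case False then show ?thesis by simp
qed

lemma del_common:
  "subseq s r \<Longrightarrow> \<exists>s'. subseq s' s \<and> subseq s' (take i r @ drop (Suc i) r) \<and> length s \<le> Suc (length s')"
proof (induction r arbitrary: s i)
  case Nil then show ?case by auto
next
  case (Cons x r)
  show ?case
  proof (cases i)
    case 0
    show ?thesis
    proof (cases "subseq s r")
      case True then show ?thesis using 0 by (intro exI[of _ s]) auto
    next
      case False
      then obtain s0 where "s = x # s0" "subseq s0 r" using Cons.prems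
        by (cases s) (auto split: if_splits)
      then show ?thesis using 0 by (intro exI[of _ s0]) auto
    qed
  next
    case (Suc j)
    show ?thesis
    proof (cases "subseq s r")
      case True
      from Cons.IH[OF True, of j] obtain s' where "subseq s' s" "subseq s' (take j r @ drop (Suc j) r)" "length s \<le> Suc (length s')" by blast
      then show ?thesis using Suc by (intro exI[of _ s']) auto
    next
      case False
      then obtain s0 where s0: "s = x # s0" "subseq s0 r" using Cons.prems
        by (cases s) (auto split: if_splits)
      from Cons.IH[OF s0(2), of j] obtain s' where "subseq s' s0" "subseq s' (take j r @ drop (Suc j) r)" "length s0 \<le> Suc (length s')" by blast
      then show ?thesis using Suc s0 by (intro exI[of _ "x#s'"]) auto
    qed
  qed
qed

lemma insdel_common:
  "insdel a b c r \<Longrightarrow> \<exists>s. subseq s c \<and> subseq s r \<and> length c \<le> length s + b \<and> length r \<le> length s + a"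
proof (induction rule: insdel.induct)
  case (refl a b c) then show ?case by (intro exI[of _ c]) auto
next
  case (ins a b c r r')
  then obtain s where s: "subseq s c" "subseq s r" "length c \<le> length s + b" "length r \<le> length s + a" by blast
  from ins.hyps(2) obtain i where i: "i < length r'" "r = take i r' @ drop (Suc i) r'"
    unfolding one_ins_def one_del_def by blast
  have "subseq r r'" using i del_subseq by metis
  hence "subseq s r'" using s(2) subseq_order.trans by blast
  moreover have "length r' = Suc (length r)" using i by auto
  ultimately show ?case using s by (intro exI[of _ s]) auto
next
  case (del a b c r r')
  then obtain s where s: "subseq s c" "subseq s r" "length c \<le> length s + b" "length r \<le> length s + a" by blast
  from del.hyps(2) obtain i where i: "i < length r" "r' = take i r @ drop (Suc i) r"
    unfolding one_del_def by blast
  from del_common[OF s(2), of i] obtain s' where s': "subseq s' s" "subseq s' r'" "length s \<le> Suc (length s')"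
    using i by blast
  have "subseq s' c" using s'(1) s(1) subseq_order.trans by blast
  moreover have "length r' = length r - 1" using i by auto
  ultimately show ?case using s s' by (intro exI[of _ s']) auto
qed

lemma finite_subseqs: "finite {s. subseq s r}"
  using set_subseqs_eq[of r] by (metis List.finite_set)

lemma card_subseqs: "card {s. subseq s r \<and> length s = k} \<le> length r choose k"
proof (induction r arbitrary: k)
  case Nil
  have "{s. subseq s ([]::'a list) \<and> length s = k} \<subseteq> {[]}" by auto
  hence "card {s. subseq s ([]::'a list) \<and> length s = k} \<le> card {[]::'a list}" by (intro card_mono) auto
  moreover have "k \<noteq> 0 \<Longrightarrow> {s. subseq s ([]::'a list) \<and> length s = k} = {}" by auto
  ultimately show ?case
  proof (cases k)
    case (Suc j)
    then have "{s. subseq s ([]::'a list) \<and> length s = k} = {}" by auto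
    then show ?thesis by (simp only: card.empty)
  qed simp
next
  case (Cons x r)
  show ?case
  proof (cases k)
    case 0
    have "{s. subseq s (x#r) \<and> length s = k} = {[]}" using 0 by auto
    then show ?thesis using 0 by simp
  next
    case (Suc j)
    have sub: "{s. subseq s (x#r) \<and> length s = k} \<subseteq> {s. subseq s r \<and> length s = Suc j} \<union> (Cons x) ` {s. subseq s r \<and> length s = j}"
    proof
      fix s assume "s \<in> {s. subseq s (x#r) \<and> length s = k}"
      then have h: "subseq s (x#r)" "length s = Suc j" using Suc by auto
      then obtain y t where st: "s = y # t" by (cases s) auto
      show "s \<in> {s. subseq s r \<and> length s = Suc j} \<union> (Cons x) ` {s. subseq s r \<and> length s = j}"
      proof (cases "y = x")
        case True
        then have "subseq t r" "length t = j" using h st by auto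
        then show ?thesis using st True by blast
      next
        case False
        then have "subseq s r" using h(1) st by simp
        then show ?thesis using h(2) by blast
      qed
    qed
    have f1: "finite {s. subseq s r \<and> length s = Suc j}" by (rule finite_subset[OF _ finite_subseqs[of r]]) blast
    have f2: "finite {s. subseq s r \<and> length s = j}" by (rule finite_subset[OF _ finite_subseqs[of r]]) blast
    have "card {s. subseq s (x#r) \<and> length s = k} \<le> card ({s. subseq s r \<and> length s = Suc j} \<union> (Cons x) ` {s. subseq s r \<and> length s = j})"
      using sub f1 f2 by (intro card_mono) auto
    also have "\<dots> \<le> card {s. subseq s r \<and> length s = Suc j} + card ((Cons x) ` {s. subseq s r \<and> length s = j})"
      by (rule card_Un_le)
    also have "\<dots> \<le> (length r choose Suc j) + (length r choose j)"
      using Cons.IH[of "Suc j"] Cons.IH[of j] card_image_le[OF f2, of "Cons x"] by linarith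
    finally show ?thesis using Suc by simp
  qed
qed




definition superF :: "real \<Rightarrow> real \<Rightarrow> nat \<Rightarrow> nat \<Rightarrow> real" where
  "superF \<alpha> \<beta> n m = (if m \<le> n then \<alpha>^m * \<beta>^(n-m) else 0)"

lemma finite_words: "finite (words q n)"
  unfolding words_def using finite_lists_length_eq[of "{0..<q}" n] by (simp add: conj_commute)

lemma card_words: "card (words q n) = q ^ n"
  unfolding words_def using card_lists_length_eq[of "{0..<q}" n] by (simp add: conj_commute)

lemma words_Suc: "c \<in> words q (Suc n) \<longleftrightarrow> (\<exists>b c'. c = b # c' \<and> b < q \<and> c' \<in> words q n)"
  unfolding words_def by (cases c) auto

lemma superF_step:
  assumes "\<alpha> \<ge> 1" "\<beta> > 0" "\<beta> + (real q - 1) * \<alpha> \<le> \<alpha> * \<beta>" "q \<ge> 1"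
  shows "superF \<alpha> \<beta> n m + (real q - 1) * superF \<alpha> \<beta> n (Suc m) \<le> superF \<alpha> \<beta> (Suc n) (Suc m)"
proof -
  consider "Suc m \<le> n" | "m = n" | "m > n" by linarith
  then show ?thesis
  proof cases
    case 1
    define X where "X = \<alpha>^m * \<beta>^(n - Suc m)"
    have X0: "X \<ge> 0" unfolding X_def using assms by simp
    have e1: "superF \<alpha> \<beta> n m = X * \<beta>" unfolding superF_def X_def using 1
      by (simp add: Suc_diff_Suc[symmetric] mult.assoc)
    have e2: "superF \<alpha> \<beta> n (Suc m) = X * \<alpha>" unfolding superF_def X_def using 1 by simp
    have e3: "superF \<alpha> \<beta> (Suc n) (Suc m) = X * (\<alpha> * \<beta>)" unfolding superF_def X_def using 1
      by (simp add: Suc_diff_Suc[symmetric])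
    have "X * \<beta> + (real q - 1) * (X * \<alpha>) = X * (\<beta> + (real q - 1) * \<alpha>)" by (simp add: algebra_simps)
    also have "\<dots> \<le> X * (\<alpha> * \<beta>)" using X0 assms(3) by (rule mult_left_mono[rotated])
    finally show ?thesis using e1 e2 e3 by simp
  next
    case 2
    have "\<alpha>^n \<le> \<alpha>^Suc n" using assms(1) by simp
    then show ?thesis using 2 unfolding superF_def by simp
  next
    case 3
    then show ?thesis unfolding superF_def by simp
  qed
qed

lemma card_super:
  assumes "\<alpha> \<ge> 1" "\<beta> \<ge> real q" "\<beta> + (real q - 1) * \<alpha> \<le> \<alpha> * \<beta>" "q \<ge> 1"
  shows "set s \<subseteq> {0..<q} \<Longrightarrow> real (card {c \<in> words q n. subseq s c}) \<le> superF \<alpha> \<beta> n (length s)"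
proof (induction n arbitrary: s)
  case 0
  have w0: "words q 0 = {[]}" unfolding words_def by auto
  show ?case
  proof (cases s)
    case Nil
    then show ?thesis using w0 unfolding superF_def by simp
  next
    case (Cons a t)
    then have "{c \<in> words q 0. subseq s c} = {}" using w0 by auto
    then have "card {c \<in> words q 0. subseq s c} = 0" by (simp only: card.empty)
    then show ?thesis unfolding superF_def by simp
  qed
next
  case (Suc n)
  have b0: "\<beta> > 0" using assms by linarith
  show ?case
  proof (cases s)
    case Nil
    have "{c \<in> words q (Suc n). subseq s c} = words q (Suc n)" using Nil by auto
    moreover have "real q ^ Suc n \<le> \<beta> ^ Suc n" using assms(2) by (intro power_mono) auto
    ultimately show ?thesis using Nil unfolding superF_def by (simp add: card_words)
  next
    case (Cons a t)
    have aq: "a < q" "set t \<subseteq> {0..<q}" using Suc.prems Cons by auto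
    let ?A = "{c \<in> words q n. subseq t c}"
    let ?B = "{c \<in> words q n. subseq (a#t) c}"
    have sub: "{c \<in> words q (Suc n). subseq s c} \<subseteq> (Cons a) ` ?A \<union> (\<lambda>(b,c). b#c) ` (({0..<q}-{a}) \<times> ?B)"
    proof
      fix c assume "c \<in> {c \<in> words q (Suc n). subseq s c}"
      then obtain b c' where bc: "c = b # c'" "b < q" "c' \<in> words q n" "subseq (a#t) (b#c')"
        using words_Suc Cons by auto
      show "c \<in> (Cons a) ` ?A \<union> (\<lambda>(b,c). b#c) ` (({0..<q}-{a}) \<times> ?B)"
      proof (cases "b = a")
        case True
        then have "subseq t c'" using bc(4) by simp
        then show ?thesis using bc True by blast
      next
        case False
        then have "subseq (a#t) c'" using bc(4) by simp
        then have "(b, c') \<in> ({0..<q}-{a}) \<times> ?B" using bc False by auto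
        then show ?thesis using bc by force
      qed
    qed
    have fA: "finite ?A" and fB: "finite ?B" using finite_words by auto
    have "card {c \<in> words q (Suc n). subseq s c} \<le> card ((Cons a) ` ?A \<union> (\<lambda>(b,c). b#c) ` (({0..<q}-{a}) \<times> ?B))"
      using sub fA fB by (intro card_mono) auto
    also have "\<dots> \<le> card ((Cons a) ` ?A) + card ((\<lambda>(b,c). b#c) ` (({0..<q}-{a}) \<times> ?B))"
      by (rule card_Un_le)
    also have "\<dots> \<le> card ?A + card (({0..<q}-{a}) \<times> ?B)"
    proof -
      have "card ((Cons a) ` ?A) \<le> card ?A" by (rule card_image_le[OF fA])
      moreover have "card ((\<lambda>(b,c). b#c) ` (({0..<q}-{a}) \<times> ?B)) \<le> card (({0..<q}-{a}) \<times> ?B)"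
        by (rule card_image_le) (use fB in auto)
      ultimately show ?thesis by linarith
    qed
    also have "\<dots> = card ?A + (q - 1) * card ?B" using aq by (simp add: card_cartesian_product)
    finally have "real (card {c \<in> words q (Suc n). subseq s c}) \<le> real (card ?A + (q - 1) * card ?B)"
      by (simp only: of_nat_le_iff)
    also have "\<dots> = real (card ?A) + (real q - 1) * real (card ?B)" using aq by (simp add: of_nat_diff)
    also have "\<dots> \<le> superF \<alpha> \<beta> n (length t) + (real q - 1) * superF \<alpha> \<beta> n (Suc (length t))"
      using Suc.IH[OF aq(2)] Suc.IH[of "a#t"] aq assms(4) Suc.prems Cons
      by (intro add_mono mult_left_mono) auto
    also have "\<dots> \<le> superF \<alpha> \<beta> (Suc n) (Suc (length t))"
      using superF_step[OF assms(1) b0 assms(3) assms(4)] by blast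
    finally show ?thesis using Cons by simp
  qed
qed




lemma pow_exp: "y > 0 \<Longrightarrow> (y::real)^m = exp (real m * ln y)"
  by (simp add: exp_of_nat_mult)

lemma binom_bound:
  fixes x :: real
  assumes "0 < x" "x < 1" "k \<le> N"
  shows "real (N choose k) \<le> exp (- (real k * ln x) - real (N - k) * ln (1 - x))"
proof -
  have "1 = (x + (1 - x))^N" by simp
  also have "\<dots> = (\<Sum>j\<le>N. real (N choose j) * x^j * (1-x)^(N-j))" by (rule binomial_ring)
  also have "\<dots> \<ge> real (N choose k) * x^k * (1-x)^(N-k)"
    using assms by (intro member_le_sum) auto
  finally have h: "real (N choose k) * (x^k * (1-x)^(N-k)) \<le> 1" by (simp add: mult.assoc)
  have p: "x^k * (1-x)^(N-k) = exp (real k * ln x + real (N - k) * ln (1 - x))"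
    using assms by (simp only: exp_add pow_exp[of x k] pow_exp[of "1-x" "N-k"])
  have "real (N choose k) \<le> 1 / (x^k * (1-x)^(N-k))"
    using h assms by (simp add: field_simps)
  also have "\<dots> = exp (- (real k * ln x + real (N - k) * ln (1 - x)))"
    unfolding p by (subst exp_minus) (simp add: divide_inverse)
  also have "\<dots> = exp (- (real k * ln x) - real (N - k) * ln (1 - x))" by (simp add: algebra_simps)
  finally show ?thesis .
qed

lemma super_exp:
  fixes \<sigma> :: real
  assumes "0 < \<sigma>" "\<sigma> \<le> (real q - 1) / real q" "q \<ge> 2" "set s \<subseteq> {0..<q}" "length s \<le> n"
  shows "real (card {c \<in> words q n. subseq s c}) \<le>
           exp (- real (length s) * ln (1 - \<sigma>) + real (n - length s) * (ln (real q - 1) - ln \<sigma>))"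
proof -
  have q0: "real q \<ge> 2" using assms by simp
  have "\<sigma> * real q \<le> real q - 1" using assms(2) q0 by (simp add: field_simps)
  then have "\<sigma> * real q < 1 * real q" by simp
  then have s1: "\<sigma> < 1" using q0 by (simp only: mult_less_cancel_right)
  define \<alpha> where "\<alpha> = 1 / (1 - \<sigma>)"
  define \<beta> where "\<beta> = (real q - 1) / \<sigma>"
  have a1: "\<alpha> \<ge> 1" unfolding \<alpha>_def using assms s1 by (simp add: field_simps)
  have b1: "\<beta> \<ge> real q" unfolding \<beta>_def using assms q0 by (simp add: field_simps)
  have ab: "\<beta> + (real q - 1) * \<alpha> \<le> \<alpha> * \<beta>" unfolding \<alpha>_def \<beta>_def using assms s1
    by (simp add: field_simps)
  have "real (card {c \<in> words q n. subseq s c}) \<le> superF \<alpha> \<beta> n (length s)"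
    using card_super[OF a1 b1 ab] assms by simp
  also have "\<dots> = \<alpha>^(length s) * \<beta>^(n - length s)" unfolding superF_def using assms by simp
  also have "\<dots> = exp (real (length s) * ln \<alpha> + real (n - length s) * ln \<beta>)"
    using a1 b1 q0 by (simp only: exp_add pow_exp[of \<alpha> "length s"] pow_exp[of \<beta> "n - length s"])
  also have "ln \<alpha> = - ln (1 - \<sigma>)" unfolding \<alpha>_def using s1 by (simp add: ln_div)
  also have "ln \<beta> = ln (real q - 1) - ln \<sigma>" unfolding \<beta>_def using assms q0 by (simp add: ln_div)
  finally show ?thesis by simp
qed




definition Gp :: "real \<Rightarrow> real \<Rightarrow> real" where
  "Gp \<gamma> \<kappa> = (if \<gamma> > 0 then - \<gamma> * ln (\<gamma>/(1+2*\<gamma>-\<kappa>)) - (1+\<gamma>-\<kappa>) * ln (1 - \<gamma>/(1+2*\<gamma>-\<kappa>)) else 0)"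

definition Kp :: "nat \<Rightarrow> real \<Rightarrow> real" where
  "Kp q \<kappa> = (if \<kappa> > 0 then \<kappa> * ln (real q - 1) - \<kappa> * ln \<kappa> - (1-\<kappa>) * ln (1-\<kappa>) else 0)"

lemma comb_exp:
  fixes X Y a b c :: real
  assumes "X \<le> exp a" "Y \<le> exp b" "0 \<le> X" "0 \<le> Y" "a + b \<le> c"
  shows "X * Y \<le> exp c"
proof -
  have "X * Y \<le> exp a * exp b" using assms by (intro mult_mono) auto
  also have "\<dots> = exp (a + b)" by (simp add: exp_add)
  also have "\<dots> \<le> exp c" using assms by simp
  finally show ?thesis .
qed

lemma card_same_len:
  assumes "length s = n"
  shows "real (card {c \<in> words q n. subseq s c}) \<le> 1"
proof -
  have "{c \<in> words q n. subseq s c} \<subseteq> {s}"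
    using assms subseq_same_length unfolding words_def by fastforce
  then have "card {c \<in> words q n. subseq s c} \<le> card {s}" by (intro card_mono) auto
  then show ?thesis by simp
qed

lemma c_nonneg:
  assumes "0 < \<kappa>" "\<kappa> \<le> (real q - 1) / real q" "q \<ge> 2"
  shows "ln (real q - 1) - ln \<kappa> + ln (1 - \<kappa>) \<ge> 0"
proof -
  have q0: "real q \<ge> 2" using assms by simp
  have "\<kappa> * real q \<le> real q - 1" using assms q0 by (simp add: field_simps)
  then have k1: "\<kappa> < 1" using q0 by (smt (verit) mult_le_cancel_right1)
  have "\<kappa> \<le> (real q - 1) * (1 - \<kappa>)" using \<open>\<kappa> * real q \<le> real q - 1\<close> by (simp add: algebra_simps)
  then have "ln \<kappa> \<le> ln ((real q - 1) * (1 - \<kappa>))" using assms k1 by (intro ln_mono) auto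
  also have "\<dots> = ln (real q - 1) + ln (1 - \<kappa>)" using q0 k1 by (simp add: ln_mult)
  finally show ?thesis by simp
qed

lemma gibbs:
  fixes e k :: real
  assumes "0 < e" "e < 1" "0 < k" "k < 1"
  shows "- e * ln e - (1 - e) * ln (1 - e) \<le> - e * ln k - (1 - e) * ln (1 - k)"
proof -
  have "ln (k / e) \<le> k / e - 1" using assms by (intro ln_le_minus_one) auto
  then have h1: "e * (ln k - ln e) \<le> k - e" using assms
    by (simp add: ln_div field_simps)
  have "ln ((1-k) / (1-e)) \<le> (1-k) / (1-e) - 1" using assms by (intro ln_le_minus_one) auto
  then have h2: "(1-e) * (ln (1-k) - ln (1-e)) \<le> e - k" using assms
    by (simp add: ln_div field_simps)
  show ?thesis using h1 h2 by (simp add: algebra_simps)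
qed




lemma term_bound:
  fixes \<gamma> \<kappa> :: real and q N k n :: nat and s :: "nat list"
  assumes q3: "q \<ge> 3" and g0: "0 \<le> \<gamma>" and k0: "0 \<le> \<kappa>" and kq: "\<kappa> < (real q - 1) / real q"
    and kN: "k \<le> N" and kn: "k \<le> n" and IN: "real (N - k) \<le> \<gamma> * real n" and DN: "real (n - k) \<le> \<kappa> * real n"
    and sq: "set s \<subseteq> {0..<q}" and sk: "length s = k"
  shows "real (N choose k) * real (card {c \<in> words q n. subseq s c}) \<le> exp (real n * (Gp \<gamma> \<kappa> + Kp q \<kappa>))"
proof -
  have q0: "real q \<ge> 3" using q3 by simp
  have "\<kappa> * real q < real q - 1" using kq q0 by (simp add: field_simps)
  then have k1: "\<kappa> < 1" using q0 by (smt (verit) mult_le_cancel_right1)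
  define I where "I = real (N - k)"
  define D where "D = real (n - k)"
  have kD: "real k = real n - D" unfolding D_def using kn by (simp add: of_nat_diff)
  have I0: "I \<ge> 0" "D \<ge> 0" unfolding I_def D_def by auto
  have Cs: "N choose k = N choose (N - k)" using kN by (rule binomial_symmetric)
  define X where "X = real (card {c \<in> words q n. subseq s c})"
  have X0: "X \<ge> 0" unfolding X_def by simp
  define c where "c = ln (real q - 1) - ln \<kappa> + ln (1 - \<kappa>)"
  show ?thesis
  proof (cases "\<gamma> > 0")
    case False
    then have "\<gamma> = 0" using g0 by simp
    then have "N = k" using IN kN by simp
    then have C1: "real (N choose k) = 1" by simp
    show ?thesis
    proof (cases "\<kappa> > 0")
      case False
      then have "\<kappa> = 0" using k0 by simp
      then have "n = k" using DN kn by simp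
      then have "X \<le> 1" unfolding X_def using card_same_len sk by blast
      then show ?thesis using C1 False \<open>\<not> 0 < \<gamma>\<close> unfolding Gp_def Kp_def X_def by simp
    next
      case True
      have "X \<le> exp (- real k * ln (1 - \<kappa>) + real (n - k) * (ln (real q - 1) - ln \<kappa>))"
        unfolding X_def using super_exp[of \<kappa> q s n] True kq q3 sq sk kn by simp
      moreover have "- real k * ln (1 - \<kappa>) + real (n - k) * (ln (real q - 1) - ln \<kappa>) \<le> real n * (Gp \<gamma> \<kappa> + Kp q \<kappa>)"
      proof -
        have cc: "c \<ge> 0" unfolding c_def using c_nonneg[of \<kappa> q] True kq q3 by simp
        have "D * c \<le> (\<kappa> * real n) * c" using DN cc unfolding D_def by (rule mult_right_mono)
        then show ?thesis using True \<open>\<not> 0 < \<gamma>\<close> unfolding Gp_def Kp_def kD D_def[symmetric] c_def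
          by (simp add: algebra_simps)
      qed
      ultimately have "X \<le> exp (real n * (Gp \<gamma> \<kappa> + Kp q \<kappa>))" by (meson exp_le_cancel_iff order_trans)
      then show ?thesis using C1 X_def by simp
    qed
  next
    case gp: True
    define x where "x = \<gamma> / (1 + 2*\<gamma> - \<kappa>)"
    have den: "1 + 2*\<gamma> - \<kappa> > 0" using gp k1 by simp
    have x0: "0 < x" "x < 1" unfolding x_def using den gp k1 by (auto simp: field_simps)
    have Lx: "- ln x > 0" "- ln (1 - x) > 0" using x0 by auto
    have Cb: "real (N choose k) \<le> exp (- (I * ln x) - real k * ln (1 - x))"
      using binom_bound[OF x0, of "N - k" N] kN unfolding Cs I_def by simp
    have Gpe: "Gp \<gamma> \<kappa> = - \<gamma> * ln x - (1 + \<gamma> - \<kappa>) * ln (1 - x)" unfolding Gp_def x_def using gp by simp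
    have t1: "I * (- ln x) \<le> (\<gamma> * real n) * (- ln x)" using IN Lx unfolding I_def by (intro mult_right_mono) auto
    show ?thesis
    proof (cases "\<kappa> > 0")
      case False
      then have "\<kappa> = 0" using k0 by simp
      then have "n = k" using DN kn by simp
      then have "X \<le> 1" unfolding X_def using card_same_len sk by blast
      then have X1: "X \<le> exp 0" by simp
      have h: "- (I * ln x) - real k * ln (1 - x) + 0 \<le> real n * (Gp \<gamma> \<kappa> + Kp q \<kappa>)"
      proof -
        have "real k * (- ln (1 - x)) \<le> ((1 + \<gamma>) * real n) * (- ln (1 - x))"
          using \<open>n = k\<close> g0 Lx by (intro mult_right_mono) (auto simp: algebra_simps)
        then show ?thesis using t1 \<open>\<kappa> = 0\<close> unfolding Gpe Kp_def by (simp add: algebra_simps)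
      qed
      show ?thesis using comb_exp[OF Cb X1 _ X0 h] unfolding X_def by simp
    next
      case kp: True
      have cc: "c \<ge> 0" unfolding c_def using c_nonneg[of \<kappa> q] kp kq q3 by simp
      have Kpe: "Kp q \<kappa> = - ln (1 - \<kappa>) + \<kappa> * c" unfolding Kp_def c_def using kp by (simp add: algebra_simps)
      show ?thesis
      proof (cases "D \<ge> (\<kappa> - \<gamma>) * real n")
        case True
        have Xb: "X \<le> exp (- real k * ln (1 - \<kappa>) + D * (ln (real q - 1) - ln \<kappa>))"
          unfolding X_def D_def using super_exp[of \<kappa> q s n] kp kq q3 sq sk kn by simp
        have "- (I * ln x) - real k * ln (1 - x) + (- real k * ln (1 - \<kappa>) + D * (ln (real q - 1) - ln \<kappa>))
              \<le> real n * (Gp \<gamma> \<kappa> + Kp q \<kappa>)"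
        proof -
          have t2: "real k * (- ln (1 - x)) \<le> ((1 + \<gamma> - \<kappa>) * real n) * (- ln (1 - x))"
            using True kD Lx by (intro mult_right_mono) (auto simp: algebra_simps)
          have t3: "D * c \<le> (\<kappa> * real n) * c" using DN cc unfolding D_def by (rule mult_right_mono)
          have "- (I * ln x) - real k * ln (1 - x) + (- real k * ln (1 - \<kappa>) + D * (ln (real q - 1) - ln \<kappa>))
              = I * (- ln x) + real k * (- ln (1 - x)) - real n * ln (1 - \<kappa>) + D * c"
            unfolding kD c_def by (simp add: algebra_simps)
          also have "\<dots> \<le> (\<gamma> * real n) * (- ln x) + ((1 + \<gamma> - \<kappa>) * real n) * (- ln (1 - x)) - real n * ln (1 - \<kappa>) + (\<kappa> * real n) * c"
            using t1 t2 t3 by linarith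
          also have "\<dots> = real n * (Gp \<gamma> \<kappa> + Kp q \<kappa>)" unfolding Gpe Kpe by (simp add: algebra_simps)
          finally show ?thesis .
        qed
        then show ?thesis using comb_exp[OF Cb Xb _ X0] by (simp add: X_def)
      next
        case False
        define e where "e = \<kappa> - \<gamma>"
        have "(\<kappa> - \<gamma>) * real n > 0" using False I0 by linarith
        then have e0: "e > 0" unfolding e_def by (auto simp: zero_less_mult_iff)
        have ek: "e < \<kappa>" unfolding e_def using gp by simp
        have eq: "e \<le> (real q - 1) / real q" using ek kq by simp
        have Xb: "X \<le> exp (- real k * ln (1 - e) + D * (ln (real q - 1) - ln e))"
          unfolding X_def D_def using super_exp[of e q s n] e0 eq q3 sq sk kn by simp
        define cB where "cB = ln (real q - 1) - ln e + ln (1 - x) + ln (1 - e)"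
        have e1: "e < 1" using ek k1 by simp
        have cB0: "cB \<ge> 0"
        proof -
          have x1: "1 - x = (1 - e) / (1 - e + \<gamma>)" unfolding x_def e_def using den by (simp add: field_simps)
          have "e * real q < real q - 1 - real q * \<gamma>" using \<open>\<kappa> * real q < real q - 1\<close> unfolding e_def by (simp add: algebra_simps)
          then have A: "real q - 1 - real q * e > real q * \<gamma>" by (simp add: algebra_simps)
          have B: "(1 - e) * (real q - 1 - real q * e) \<ge> (1 - e) * (real q * \<gamma>)"
            using A e1 by (intro mult_left_mono) auto
          have C: "(1 - e) * (real q * \<gamma>) \<ge> e * \<gamma>"
          proof -
            have "(1 - e) * real q \<ge> e" using eq q0 e1 by (simp add: field_simps)
            then show ?thesis using gp by (metis mult.assoc mult_right_mono less_le_not_le gp)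
          qed
          have key: "e * (1 - e + \<gamma>) \<le> (real q - 1) * (1 - e) * (1 - e)"
            using B C by (simp add: algebra_simps)
          have "e \<le> (real q - 1) * (1 - x) * (1 - e)"
            unfolding x1 using key den e1 gp e0 by (simp add: field_simps)
          then have "ln e \<le> ln ((real q - 1) * (1 - x) * (1 - e))" using e0 by (intro ln_mono) auto
          also have "\<dots> = ln (real q - 1) + ln (1 - x) + ln (1 - e)" using q0 x0 e1 by (simp add: ln_mult)
          finally show ?thesis unfolding cB_def by simp
        qed
        have "- (I * ln x) - real k * ln (1 - x) + (- real k * ln (1 - e) + D * (ln (real q - 1) - ln e))
              \<le> real n * (Gp \<gamma> \<kappa> + Kp q \<kappa>)"
        proof -
          have t3: "D * cB \<le> (e * real n) * cB" using False cB0 unfolding e_def by (intro mult_right_mono) auto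
          have t4: "(e * real n) * c \<le> (\<kappa> * real n) * c" using ek cc by (intro mult_right_mono) auto
          have gib: "- e * ln e - (1 - e) * ln (1 - e) \<le> - e * ln \<kappa> - (1 - e) * ln (1 - \<kappa>)"
            using gibbs[OF e0 e1 kp k1] .
          have gibn: "real n * (- e * ln e - (1 - e) * ln (1 - e)) \<le> real n * (- e * ln \<kappa> - (1 - e) * ln (1 - \<kappa>))"
            using gib by (intro mult_left_mono) auto
          have "- (I * ln x) - real k * ln (1 - x) + (- real k * ln (1 - e) + D * (ln (real q - 1) - ln e))
              = I * (- ln x) + real n * (- ln (1 - x) - ln (1 - e)) + D * cB"
            unfolding kD cB_def by (simp add: algebra_simps)
          also have "\<dots> \<le> (\<gamma> * real n) * (- ln x) + real n * (- ln (1 - x) - ln (1 - e)) + (e * real n) * cB"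
            using t1 t3 by linarith
          also have "\<dots> = (\<gamma> * real n) * (- ln x) + ((1 - e) * real n) * (- ln (1 - x))
                + real n * (- e * ln e - (1 - e) * ln (1 - e)) + (e * real n) * ln (real q - 1)"
            unfolding cB_def by (simp add: algebra_simps)
          also have "\<dots> \<le> (\<gamma> * real n) * (- ln x) + ((1 - e) * real n) * (- ln (1 - x))
                + real n * (- e * ln \<kappa> - (1 - e) * ln (1 - \<kappa>)) + (e * real n) * ln (real q - 1)"
            using gibn by linarith
          also have "\<dots> = (\<gamma> * real n) * (- ln x) + ((1 - e) * real n) * (- ln (1 - x))
                - real n * ln (1 - \<kappa>) + (e * real n) * c"
            unfolding c_def by (simp add: algebra_simps)
          also have "\<dots> \<le> (\<gamma> * real n) * (- ln x) + ((1 - e) * real n) * (- ln (1 - x))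
                - real n * ln (1 - \<kappa>) + (\<kappa> * real n) * c"
            using t4 by linarith
          also have "\<dots> = real n * (Gp \<gamma> \<kappa> + Kp q \<kappa>)" unfolding Gpe Kpe e_def by (simp add: algebra_simps)
          finally show ?thesis .
        qed
        then show ?thesis using comb_exp[OF Cb Xb _ X0] by (simp add: X_def)
      qed
    qed
  qed
qed




lemma subseq_set: "subseq s r \<Longrightarrow> set s \<subseteq> set r"
  by (induct rule: list_emb.induct) auto

lemma ball_bound:
  fixes \<gamma> \<kappa> :: real and q n a b :: nat and r :: "nat list"
  assumes q3: "q \<ge> 3" and g0: "0 \<le> \<gamma>" and k0: "0 \<le> \<kappa>" and kq: "\<kappa> < (real q - 1) / real q"
    and an: "real a \<le> \<gamma> * real n" and bn: "real b \<le> \<kappa> * real n" and rq: "set r \<subseteq> {0..<q}"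
  shows "real (card {c \<in> words q n. insdel a b c r}) \<le> (real n + 1) * exp (real n * (Gp \<gamma> \<kappa> + Kp q \<kappa>))"
proof -
  define Z where "Z = exp (real n * (Gp \<gamma> \<kappa> + Kp q \<kappa>))"
  define K where "K = {k. k \<le> n \<and> k \<le> length r \<and> length r - k \<le> a \<and> n - k \<le> b}"
  define S where "S k = {s. subseq s r \<and> length s = k}" for k
  define U where "U s = {c \<in> words q n. subseq s c}" for s
  have fK: "finite K" unfolding K_def by auto
  have fS: "finite (S k)" for k unfolding S_def by (rule finite_subset[OF _ finite_subseqs[of r]]) auto
  have fU: "finite (U s)" for s unfolding U_def using finite_words by auto
  have sub: "{c \<in> words q n. insdel a b c r} \<subseteq> (\<Union>k\<in>K. \<Union>s\<in>S k. U s)"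
  proof
    fix c assume "c \<in> {c \<in> words q n. insdel a b c r}"
    then have c: "c \<in> words q n" "insdel a b c r" by auto
    then obtain s where s: "subseq s c" "subseq s r" "length c \<le> length s + b" "length r \<le> length s + a"
      using insdel_common by blast
    have lc: "length c = n" using c unfolding words_def by auto
    have "length s \<le> length c" "length s \<le> length r" using s list_emb_length by blast+
    then have "length s \<in> K" unfolding K_def using s lc by auto
    moreover have "s \<in> S (length s)" unfolding S_def using s by auto
    moreover have "c \<in> U s" unfolding U_def using c s by auto
    ultimately show "c \<in> (\<Union>k\<in>K. \<Union>s\<in>S k. U s)" by blast
  qed
  have "card {c \<in> words q n. insdel a b c r} \<le> card (\<Union>k\<in>K. \<Union>s\<in>S k. U s)"
    using sub fK fS fU by (intro card_mono) auto
  also have "\<dots> \<le> (\<Sum>k\<in>K. card (\<Union>s\<in>S k. U s))" by (rule card_UN_le[OF fK])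
  also have "\<dots> \<le> (\<Sum>k\<in>K. \<Sum>s\<in>S k. card (U s))" by (intro sum_mono card_UN_le fS)
  finally have A: "real (card {c \<in> words q n. insdel a b c r}) \<le> (\<Sum>k\<in>K. \<Sum>s\<in>S k. real (card (U s)))"
    by (metis (mono_tags, lifting) of_nat_le_iff of_nat_sum sum.cong)
  have B: "(\<Sum>s\<in>S k. real (card (U s))) \<le> Z" if kK: "k \<in> K" for k
  proof -
    have kk: "k \<le> n" "k \<le> length r" "length r - k \<le> a" "n - k \<le> b" using kK unfolding K_def by auto
    define C where "C = real (length r choose k)"
    have C0: "C > 0" unfolding C_def using kk by simp
    have each: "real (card (U s)) \<le> Z / C" if sS: "s \<in> S k" for s
    proof -
      have ss: "subseq s r" "length s = k" using sS unfolding S_def by auto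
      have sq: "set s \<subseteq> {0..<q}" using subseq_set[OF ss(1)] rq by blast
      have "real (length r - k) \<le> \<gamma> * real n" using kk an by linarith
      moreover have "real (n - k) \<le> \<kappa> * real n" using kk bn by linarith
      ultimately have "C * real (card (U s)) \<le> Z"
        unfolding C_def U_def Z_def using term_bound[OF q3 g0 k0 kq kk(2) kk(1) _ _ sq ss(2)] by blast
      then show ?thesis using C0 by (simp add: field_simps)
    qed
    have "(\<Sum>s\<in>S k. real (card (U s))) \<le> (\<Sum>s\<in>S k. Z / C)" using each by (rule sum_mono)
    also have "\<dots> = real (card (S k)) * (Z / C)" by simp
    also have "\<dots> \<le> C * (Z / C)"
    proof (rule mult_right_mono)
      show "real (card (S k)) \<le> C" unfolding C_def S_def using card_subseqs[of r k] by simp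
      show "0 \<le> Z / C" unfolding Z_def using C0 by simp
    qed
    also have "\<dots> = Z" using C0 by simp
    finally show ?thesis .
  qed
  have "(\<Sum>k\<in>K. \<Sum>s\<in>S k. real (card (U s))) \<le> (\<Sum>k\<in>K. Z)" using B by (rule sum_mono)
  also have "\<dots> = real (card K) * Z" by simp
  also have "\<dots> \<le> (real n + 1) * Z"
  proof (rule mult_right_mono)
    have "K \<subseteq> {..n}" unfolding K_def by auto
    then have "card K \<le> card {..n}" by (intro card_mono) auto
    then show "real (card K) \<le> real n + 1" by simp
    show "0 \<le> Z" unfolding Z_def by simp
  qed
  finally show ?thesis using A unfolding Z_def U_def by linarith
qed




lemma Hq_ln:
  assumes "0 < y" "y < 1" "q \<ge> 2"
  shows "ln (real q) * Hq q y = y * ln (real q - 1) - y * ln y - (1 - y) * ln (1 - y)"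
proof -
  have L: "ln (real q) > 0" using assms by simp
  have "Hq q y = (y * ln (real q - 1) - y * ln y - (1 - y) * ln (1 - y)) / ln (real q)"
    using assms unfolding Hq_def log_def by (simp add: diff_divide_distrib)
  then show ?thesis using L by simp
qed

lemma rate_ln:
  fixes \<gamma> \<kappa> \<epsilon> :: real
  assumes q3: "q \<ge> 3" and g0: "0 \<le> \<gamma>" and k0: "0 \<le> \<kappa>" and k1: "\<kappa> < 1"
  shows "ln (real q) * insdel_rate q \<gamma> \<kappa> \<epsilon> = ln (real q) - (Gp \<gamma> \<kappa> + Kp q \<kappa>) - \<epsilon> * ln (real q)"
proof -
  have Lq: "ln (real q) > 0" using q3 by simp
  have G: "ln (real q) * ((2*\<gamma> - \<kappa> + 1) * Hq q (\<gamma> / (2*\<gamma> - \<kappa> + 1)) - \<gamma> * log q (real q - 1)) = Gp \<gamma> \<kappa>"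
  proof (cases "\<gamma> > 0")
    case True
    define x where "x = \<gamma> / (2*\<gamma> - \<kappa> + 1)"
    have den: "2*\<gamma> - \<kappa> + 1 > 0" using True k1 by simp
    have x0: "0 < x" "x < 1" unfolding x_def using den True k1 by (auto simp: field_simps)
    have e1: "(2*\<gamma> - \<kappa> + 1) * x = \<gamma>" unfolding x_def using den by simp
    have e2: "(2*\<gamma> - \<kappa> + 1) * (1 - x) = 1 + \<gamma> - \<kappa>" unfolding x_def using den by (simp add: field_simps)
    have "ln (real q) * ((2*\<gamma> - \<kappa> + 1) * Hq q x - \<gamma> * log q (real q - 1))
        = (2*\<gamma> - \<kappa> + 1) * (ln (real q) * Hq q x) - \<gamma> * ln (real q - 1)"
      using Lq unfolding log_def by (simp add: field_simps)
    also have "\<dots> = ((2*\<gamma> - \<kappa> + 1) * x) * ln (real q - 1) - ((2*\<gamma> - \<kappa> + 1) * x) * ln x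
        - ((2*\<gamma> - \<kappa> + 1) * (1 - x)) * ln (1 - x) - \<gamma> * ln (real q - 1)"
    proof -
      have hx: "ln (real q) * Hq q x = x * ln (real q - 1) - x * ln x - (1 - x) * ln (1 - x)"
        using Hq_ln[OF x0] q3 by simp
      show ?thesis unfolding hx by (simp add: algebra_simps)
    qed
    also have "\<dots> = Gp \<gamma> \<kappa>" unfolding e1 e2 Gp_def using True
      by (simp add: x_def algebra_simps)
    finally show ?thesis unfolding x_def .
  next
    case False
    then have "\<gamma> = 0" using g0 by simp
    then show ?thesis unfolding Gp_def Hq_def by simp
  qed
  have K: "ln (real q) * Hq q \<kappa> = Kp q \<kappa>"
  proof (cases "\<kappa> > 0")
    case True then show ?thesis unfolding Kp_def using Hq_ln[of \<kappa> q] k1 q3 by simp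
  next
    case False then show ?thesis unfolding Kp_def Hq_def by simp
  qed
  show ?thesis unfolding insdel_rate_def using G K by (simp add: algebra_simps)
qed

lemma Gp_nonneg: "0 \<le> \<gamma> \<Longrightarrow> \<kappa> < 1 \<Longrightarrow> Gp \<gamma> \<kappa> \<ge> 0"
proof -
  assume g0: "0 \<le> \<gamma>" and k1: "\<kappa> < 1"
  show ?thesis
  proof (cases "\<gamma> > 0")
    case True
    define x where "x = \<gamma> / (1 + 2*\<gamma> - \<kappa>)"
    have den: "1 + 2*\<gamma> - \<kappa> > 0" using True k1 by simp
    have x0: "0 < x" "x < 1" unfolding x_def using den True k1 by (auto simp: field_simps)
    have "ln x < 0" "ln (1 - x) < 0" using x0 by auto
    moreover have "1 + \<gamma> - \<kappa> > 0" using k1 g0 by simp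
    ultimately have "\<gamma> * ln x \<le> 0" "(1 + \<gamma> - \<kappa>) * ln (1 - x) \<le> 0"
      using True by (auto intro!: mult_nonneg_nonpos)
    then show ?thesis unfolding Gp_def x_def[symmetric] using True by simp
  qed (simp add: Gp_def)
qed

lemma Kp_nonneg: "q \<ge> 2 \<Longrightarrow> 0 \<le> \<kappa> \<Longrightarrow> \<kappa> < 1 \<Longrightarrow> Kp q \<kappa> \<ge> 0"
proof -
  assume q2: "q \<ge> 2" and k0: "0 \<le> \<kappa>" and k1: "\<kappa> < 1"
  show ?thesis
  proof (cases "\<kappa> > 0")
    case True
    have "ln \<kappa> < 0" "ln (1 - \<kappa>) \<le> 0" using True k1 by auto
    moreover have "ln (real q - 1) \<ge> 0" using q2 by simp
    ultimately have "\<kappa> * ln (real q - 1) \<ge> 0" "\<kappa> * ln \<kappa> \<le> 0" "(1 - \<kappa>) * ln (1 - \<kappa>) \<le> 0"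
      using True k1 by (auto intro!: mult_nonneg_nonpos mult_nonneg_nonneg)
    then show ?thesis unfolding Kp_def using True by simp
  qed (simp add: Kp_def)
qed

lemma ratio_binom:
  fixes Q M j :: nat
  assumes "j \<le> M" "M \<le> Q"
  shows "real (Q - j choose (M - j)) * real Q ^ j \<le> real (Q choose M) * real M ^ j"
  using assms(1)
proof (induction j)
  case 0 then show ?case by simp
next
  case (Suc j)
  define C' where "C' = real (Q - j choose (M - j))"
  define A where "A = real (Q - Suc j choose (M - Suc j))"
  have jM: "j < M" using Suc by simp
  have jQ: "j < Q" using jM assms by simp
  have abs: "Suc (M - Suc j) * (Q - j choose Suc (M - Suc j)) = (Q - j) * ((Q - j - 1) choose (M - Suc j))"
    by (rule binomial_absorption)
  have s1: "Suc (M - Suc j) = M - j" using jM by simp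
  have s2: "Q - j - 1 = Q - Suc j" by simp
  have abs2: "(M - j) * (Q - j choose (M - j)) = (Q - j) * ((Q - Suc j) choose (M - Suc j))"
    using abs unfolding s1 s2 .
  have abs': "real (M - j) * C' = real (Q - j) * A" unfolding C'_def A_def
    using arg_cong[OF abs2, of real] by (simp only: of_nat_mult)
  have A0: "A \<ge> 0" "C' \<ge> 0" unfolding A_def C'_def by auto
  have "real (Q - j) * (A * real Q) = C' * (real (M - j) * real Q)" using abs' by (simp add: algebra_simps)
  also have "\<dots> \<le> C' * (real M * real (Q - j))"
  proof (rule mult_left_mono)
    have "real M * real j \<le> real Q * real j" using assms by (intro mult_right_mono) auto
    then show "real (M - j) * real Q \<le> real M * real (Q - j)"
      using jM jQ assms by (simp add: of_nat_diff algebra_simps)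
    show "0 \<le> C'" by (rule A0)
  qed
  finally have "real (Q - j) * (A * real Q) \<le> real (Q - j) * (C' * real M)" by (simp add: algebra_simps)
  then have AQ: "A * real Q \<le> C' * real M" using jQ by (simp add: mult_le_cancel_left)
  have "A * real Q ^ Suc j = (A * real Q) * real Q ^ j" by (simp add: algebra_simps)
  also have "\<dots> \<le> (C' * real M) * real Q ^ j" using AQ by (intro mult_right_mono) auto
  also have "\<dots> = real M * (C' * real Q ^ j)" by (simp add: algebra_simps)
  also have "\<dots> \<le> real M * (real (Q choose M) * real M ^ j)"
    using Suc.IH jM unfolding C'_def by (intro mult_left_mono) auto
  also have "\<dots> = real (Q choose M) * real M ^ Suc j" by (simp add: algebra_simps)
  finally show ?case unfolding A_def .
qed

lemma card_codes_T:
  fixes W T :: "'a set"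
  assumes fW: "finite W" and TW: "T \<subseteq> W" and cT: "card T = L" and LM: "L \<le> M"
  shows "card {C. C \<subseteq> W \<and> card C = M \<and> T \<subseteq> C} \<le> (card W - L) choose (M - L)"
proof -
  have fT: "finite T" using fW TW finite_subset by blast
  have inj: "inj_on (\<lambda>C. C - T) {C. C \<subseteq> W \<and> card C = M \<and> T \<subseteq> C}"
  proof (rule inj_onI)
    fix x y assume "x \<in> {C. C \<subseteq> W \<and> card C = M \<and> T \<subseteq> C}" "y \<in> {C. C \<subseteq> W \<and> card C = M \<and> T \<subseteq> C}" "x - T = y - T"
    then have "x = T \<union> (x - T)" "y = T \<union> (y - T)" "x - T = y - T" by auto
    then show "x = y" by simp
  qed
  have img: "(\<lambda>C. C - T) ` {C. C \<subseteq> W \<and> card C = M \<and> T \<subseteq> C} \<subseteq> {B. B \<subseteq> W - T \<and> card B = M - L}"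
  proof
    fix B assume "B \<in> (\<lambda>C. C - T) ` {C. C \<subseteq> W \<and> card C = M \<and> T \<subseteq> C}"
    then obtain C where C: "C \<subseteq> W" "card C = M" "T \<subseteq> C" "B = C - T" by auto
    have "card (C - T) = card C - card T" using C fT by (intro card_Diff_subset) auto
    then show "B \<in> {B. B \<subseteq> W - T \<and> card B = M - L}" using C cT by auto
  qed
  have "card {C. C \<subseteq> W \<and> card C = M \<and> T \<subseteq> C} = card ((\<lambda>C. C - T) ` {C. C \<subseteq> W \<and> card C = M \<and> T \<subseteq> C})"
    using inj by (simp add: card_image)
  also have "\<dots> \<le> card {B. B \<subseteq> W - T \<and> card B = M - L}"
    using img fW by (intro card_mono) auto
  also have "\<dots> = card (W - T) choose (M - L)" using fW by (intro n_subsets) auto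
  also have "card (W - T) = card W - L" using TW fT cT by (simp add: card_Diff_subset)
  finally show ?thesis .
qed

lemma geom_sum_le: "(q::nat) \<ge> 2 \<Longrightarrow> (\<Sum>l\<le>m. q ^ l) \<le> q ^ Suc m"
proof (induction m)
  case 0 then show ?case by simp
next
  case (Suc m)
  have "(\<Sum>l\<le>Suc m. q ^ l) = (\<Sum>l\<le>m. q ^ l) + q ^ Suc m" by simp
  also have "\<dots> \<le> q ^ Suc m + q ^ Suc m" using Suc by simp
  also have "\<dots> \<le> q * q ^ Suc m" using Suc.prems by (simp add: mult_2[symmetric])
  finally show ?case by simp
qed

lemma card_Rs:
  assumes "q \<ge> 2"
  shows "finite {r. set r \<subseteq> {0..<q} \<and> length r \<le> m} \<and> card {r::nat list. set r \<subseteq> {0..<q} \<and> length r \<le> m} \<le> q ^ Suc m"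
proof -
  have eq: "{r::nat list. set r \<subseteq> {0..<q} \<and> length r \<le> m} = (\<Union>l\<in>{..m}. {r. set r \<subseteq> {0..<q} \<and> length r = l})"
    by auto
  have f: "finite {r::nat list. set r \<subseteq> {0..<q} \<and> length r = l}" for l
    using finite_lists_length_eq[of "{0..<q}" l] by simp
  have "card {r::nat list. set r \<subseteq> {0..<q} \<and> length r \<le> m} \<le> (\<Sum>l\<le>m. card {r::nat list. set r \<subseteq> {0..<q} \<and> length r = l})"
    unfolding eq by (rule card_UN_le) auto
  also have "\<dots> = (\<Sum>l\<le>m. q ^ l)" using card_lists_length_eq[of "{0..<q}"] by simp
  also have "\<dots> \<le> q ^ Suc m" using geom_sum_le assms by blast
  finally show ?thesis unfolding eq using f by auto
qed

lemma eventually_lin_exp: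
  fixes c :: real
  assumes "c > 0"
  shows "\<exists>N. \<forall>n\<ge>N. real n + 1 \<le> exp (real n * c)"
proof (intro exI allI impI)
  fix n :: nat assume "n \<ge> nat \<lceil>4 / c^2\<rceil>"
  then have nb: "real n \<ge> 4 / c^2" by linarith
  have t0: "real n * c / 2 \<ge> 0" using assms by simp
  have "exp (real n * c) = exp (real n * c / 2) ^ 2"
    by (simp add: exp_double[symmetric] power2_eq_square exp_add[symmetric])
  also have "\<dots> \<ge> (1 + real n * c / 2) ^ 2"
    using exp_ge_add_one_self[of "real n * c / 2"] t0 by (intro power_mono) auto
  finally have e: "exp (real n * c) \<ge> (1 + real n * c / 2) ^ 2" .
  have "(1 + real n * c / 2) ^ 2 \<ge> 1 + (real n * c / 2) ^ 2"
    using t0 by (simp add: power2_eq_square algebra_simps)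
  moreover have "(real n * c / 2) ^ 2 \<ge> real n"
  proof -
    have "real n * c^2 \<ge> 4" using nb assms by (simp add: field_simps)
    then have "real n * (real n * c^2) \<ge> real n * 4" by (intro mult_left_mono) auto
    then show ?thesis by (simp add: power2_eq_square field_simps)
  qed
  ultimately show "real n + 1 \<le> exp (real n * c)" using e by linarith
qed




lemma codes_T_bound:
  fixes W T :: "'a set"
  assumes fW: "finite W" and TW: "T \<subseteq> W" and cT: "card T = L" and MQ: "M \<le> card W"
  shows "real (card {C. C \<subseteq> W \<and> card C = M \<and> T \<subseteq> C}) \<le> real (card W choose M) * (real M / real (card W)) ^ L"
proof (cases "L \<le> M")
  case True
  have Q0: "card W > 0 \<or> M = 0" using MQ by auto
  have h1: "real (card {C. C \<subseteq> W \<and> card C = M \<and> T \<subseteq> C}) \<le> real ((card W - L) choose (M - L))"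
    using card_codes_T[OF fW TW cT True] by simp
  show ?thesis
  proof (cases "card W = 0")
    case True
    then have "M = 0" using MQ by simp
    then have "L = 0" using \<open>L \<le> M\<close> by simp
    then show ?thesis using h1 \<open>M = 0\<close> True by simp
  next
    case False
    have h2: "real ((card W - L) choose (M - L)) * real (card W) ^ L \<le> real (card W choose M) * real M ^ L"
      by (rule ratio_binom[OF True MQ])
    have "real ((card W - L) choose (M - L)) \<le> real (card W choose M) * real M ^ L / real (card W) ^ L"
      using h2 False by (simp add: field_simps)
    also have "\<dots> = real (card W choose M) * (real M / real (card W)) ^ L" by (simp add: power_divide)
    finally show ?thesis using h1 by linarith
  qed
next
  case False
  have fT: "finite T" using fW TW finite_subset by blast
  have "{C. C \<subseteq> W \<and> card C = M \<and> T \<subseteq> C} = {}"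
  proof (rule ccontr)
    assume "{C. C \<subseteq> W \<and> card C = M \<and> T \<subseteq> C} \<noteq> {}"
    then obtain C where C: "C \<subseteq> W" "card C = M" "T \<subseteq> C" by auto
    then have "card T \<le> card C" using fW finite_subset by (intro card_mono) auto
    then show False using C cT False by simp
  qed
  then have "card {C. C \<subseteq> W \<and> card C = M \<and> T \<subseteq> C} = 0" by (simp only: card.empty)
  then show ?thesis by simp
qed

lemma choose_le_pow_real: "real (N choose L) \<le> real N ^ L"
proof (cases "L \<le> N")
  case True then show ?thesis using binomial_le_pow[OF True] by (metis of_nat_le_iff of_nat_power)
next
  case False then show ?thesis by (simp add: binomial_eq_0)
qed




lemma prob_bound:
  fixes q n :: nat and \<gamma> \<kappa> \<epsilon> Kc :: real
  assumes q3: "q \<ge> 3" and g0: "0 \<le> \<gamma>" and k0: "0 \<le> \<kappa>" and kq: "\<kappa> < (real q - 1) / real q"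
    and e0: "0 < \<epsilon>" and n1: "n \<ge> 1"
    and lin: "real n + 1 \<le> exp (real n * (\<epsilon> * ln (real q) / 2))"
    and Kc: "Kc = 2 * (\<gamma> + 3)"
  shows "prob_random_code q n (insdel_rate q \<gamma> \<kappa> \<epsilon>) (list_decodable_insdel q n \<gamma> \<kappa> (Kc / \<epsilon>))
           \<ge> 1 - real q powr (- real n)"
proof -
  have q0: "real q \<ge> 3" using q3 by simp
  have "\<kappa> * real q < real q - 1" using kq q0 by (simp add: field_simps)
  then have k1: "\<kappa> < 1" using q0 by (smt (verit) mult_le_cancel_right1)
  define Lq where "Lq = ln (real q)"
  have Lq0: "Lq > 0" unfolding Lq_def using q0 by simp
  define E where "E = Gp \<gamma> \<kappa> + Kp q \<kappa>"
  have E0: "E \<ge> 0" unfolding E_def using Gp_nonneg[OF g0 k1] Kp_nonneg[of q \<kappa>] q3 k0 k1 by simp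
  define R where "R = insdel_rate q \<gamma> \<kappa> \<epsilon>"
  have RL: "Lq * R = Lq - E - \<epsilon> * Lq" unfolding Lq_def R_def E_def using rate_ln[OF q3 g0 k0 k1] .
  define W where "W = words q n"
  define Q where "Q = q ^ n"
  have fW: "finite W" unfolding W_def by (rule finite_words)
  have cW: "card W = Q" unfolding W_def Q_def by (rule card_words)
  have Qexp: "real Q = exp (real n * Lq)" unfolding Q_def Lq_def using q0
    by (simp add: pow_exp)
  define M where "M = nat \<lfloor>real q powr (R * real n)\<rfloor>"
  have qpR: "real q powr (R * real n) = exp (real n * (Lq - E - \<epsilon> * Lq))"
  proof -
    have "real q powr (R * real n) = exp (R * real n * Lq)" unfolding powr_def Lq_def using q0 by simp
    also have "R * real n * Lq = real n * (Lq * R)" by (simp add: algebra_simps)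
    also have "\<dots> = real n * (Lq - E - \<epsilon> * Lq)" using RL by simp
    finally show ?thesis .
  qed
  have Mle: "real M \<le> exp (real n * (Lq - E - \<epsilon> * Lq))"
    unfolding M_def qpR by simp
  have "exp (real n * (Lq - E - \<epsilon> * Lq)) \<le> exp (real n * Lq)"
  proof -
    have "\<epsilon> * Lq > 0" using e0 Lq0 by simp
    then have "Lq - E - \<epsilon> * Lq \<le> Lq" using E0 by linarith
    then have "real n * (Lq - E - \<epsilon> * Lq) \<le> real n * Lq" by (intro mult_left_mono) auto
    then show ?thesis by simp
  qed
  then have "real M \<le> real Q" using Mle Qexp by linarith
  then have MQ: "M \<le> Q" by simp
  define Codes where "Codes = {C. C \<subseteq> W \<and> card C = M}"
  have Codes_eq: "random_codes q n R = Codes" unfolding random_codes_def Codes_def W_def M_def by simp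
  have fCodes: "finite Codes" unfolding Codes_def using fW by simp
  have cCodes: "card Codes = Q choose M" unfolding Codes_def using n_subsets[OF fW, of M] cW by simp
  have cC0: "real (card Codes) > 0" using cCodes MQ by simp
  define a where "a = nat \<lfloor>\<gamma> * real n\<rfloor>"
  define b where "b = nat \<lfloor>\<kappa> * real n\<rfloor>"
  have an: "real a \<le> \<gamma> * real n" unfolding a_def using g0 by simp
  have bn: "real b \<le> \<kappa> * real n" unfolding b_def using k0 by simp
  define L where "L = nat \<lfloor>Kc / \<epsilon>\<rfloor> + 1"
  have KL: "Kc / \<epsilon> < real L" unfolding L_def by linarith
  have L1: "L \<ge> 1" unfolding L_def by simp
  define ball where "ball r = {c \<in> W. insdel a b c r}" for r
  define Rs where "Rs = {r::nat list. set r \<subseteq> {0..<q} \<and> length r \<le> n + a}"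
  define TT where "TT r = {T. T \<subseteq> ball r \<and> card T = L}" for r
  define CT where "CT T = {C. C \<subseteq> W \<and> card C = M \<and> T \<subseteq> C}" for T
  define P where "P = list_decodable_insdel q n \<gamma> \<kappa> (Kc / \<epsilon>)"
  define Bad where "Bad = {C \<in> Codes. \<not> P C}"
  have fRs: "finite Rs" and cRs: "card Rs \<le> q ^ Suc (n + a)" unfolding Rs_def using card_Rs[of q "n + a"] q3 by auto
  have fball: "finite (ball r)" for r unfolding ball_def using fW by simp
  have fTT: "finite (TT r)" for r unfolding TT_def using fball[of r]
    by (rule finite_subset[rotated, OF iffD2[OF finite_Pow_iff]]) auto
  have subBad: "Bad \<subseteq> (\<Union>r\<in>Rs. \<Union>T\<in>TT r. CT T)"
  proof
    fix C assume "C \<in> Bad"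
    then have C: "C \<subseteq> W" "card C = M" "\<not> P C" unfolding Bad_def Codes_def by auto
    then obtain r where r: "set r \<subseteq> {0..<q}" "\<not> real (card {c \<in> C. insdel a b c r}) \<le> Kc / \<epsilon>"
      unfolding P_def list_decodable_insdel_def a_def b_def by blast
    define Sr where "Sr = {c \<in> C. insdel a b c r}"
    have "finite C" using C(1) fW finite_subset by blast
    then have fSr: "finite Sr" unfolding Sr_def by simp
    have "real (card Sr) > Kc / \<epsilon>" using r unfolding Sr_def by simp
    moreover have "real (nat \<lfloor>Kc / \<epsilon>\<rfloor>) \<le> Kc / \<epsilon>"
    proof -
      have kp: "Kc / \<epsilon> \<ge> 0" using Kc g0 e0 by simp
      then have "real (nat \<lfloor>Kc / \<epsilon>\<rfloor>) = of_int \<lfloor>Kc / \<epsilon>\<rfloor>" by simp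
      also have "\<dots> \<le> Kc / \<epsilon>" by (rule of_int_floor_le)
      finally show ?thesis .
    qed
    ultimately have "real (card Sr) > real (nat \<lfloor>Kc / \<epsilon>\<rfloor>)" by linarith
    then have "L \<le> card Sr" unfolding L_def by linarith
    then obtain T where T: "T \<subseteq> Sr" "card T = L" "finite T" by (rule obtain_subset_with_card_n)
    have TB: "T \<subseteq> ball r" using T C unfolding Sr_def ball_def by auto
    have "T \<noteq> {}" using T L1 by auto
    then obtain c where c: "c \<in> T" by auto
    then have cW': "c \<in> W" "insdel a b c r" using TB unfolding ball_def by auto
    then obtain s where s: "subseq s c" "length r \<le> length s + a" using insdel_common by blast
    have "length c = n" using cW' unfolding W_def words_def by auto
    then have "length r \<le> n + a" using s list_emb_length by fastforce
    then have "r \<in> Rs" unfolding Rs_def using r by auto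
    moreover have "T \<in> TT r" unfolding TT_def using TB T by auto
    moreover have "C \<in> CT T" unfolding CT_def using C T Sr_def by auto
    ultimately show "C \<in> (\<Union>r\<in>Rs. \<Union>T\<in>TT r. CT T)" by blast
  qed
  have fCT: "finite (CT T)" for T unfolding CT_def using fW by simp
  have "card Bad \<le> card (\<Union>r\<in>Rs. \<Union>T\<in>TT r. CT T)"
    using subBad fRs fTT fCT by (intro card_mono) auto
  also have "\<dots> \<le> (\<Sum>r\<in>Rs. card (\<Union>T\<in>TT r. CT T))" by (rule card_UN_le[OF fRs])
  also have "\<dots> \<le> (\<Sum>r\<in>Rs. \<Sum>T\<in>TT r. card (CT T))" by (intro sum_mono card_UN_le fTT)
  finally have B1: "real (card Bad) \<le> (\<Sum>r\<in>Rs. \<Sum>T\<in>TT r. real (card (CT T)))"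
    by (metis (mono_tags, lifting) of_nat_le_iff of_nat_sum sum.cong)
  define \<rho> where "\<rho> = exp (- (real n * (\<epsilon> * Lq / 2)))"
  have rho0: "0 \<le> \<rho>" unfolding \<rho>_def by simp
  have B2: "(\<Sum>T\<in>TT r. real (card (CT T))) \<le> real (card Codes) * \<rho> ^ L" if "r \<in> Rs" for r
  proof -
    have rq: "set r \<subseteq> {0..<q}" using that unfolding Rs_def by auto
    have each: "real (card (CT T)) \<le> real (card Codes) * (real M / real Q) ^ L" if "T \<in> TT r" for T
    proof -
      have "T \<subseteq> W" "card T = L" using that unfolding TT_def ball_def by auto
      then show ?thesis unfolding CT_def using codes_T_bound[OF fW _ _, of T L M] cW MQ cCodes by simp
    qed
    have "(\<Sum>T\<in>TT r. real (card (CT T))) \<le> (\<Sum>T\<in>TT r. real (card Codes) * (real M / real Q) ^ L)"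
      using each by (rule sum_mono)
    also have "\<dots> = real (card (TT r)) * (real (card Codes) * (real M / real Q) ^ L)" by simp
    also have "\<dots> \<le> real (card (ball r)) ^ L * (real (card Codes) * (real M / real Q) ^ L)"
    proof (rule mult_right_mono)
      have "card (TT r) = card (ball r) choose L" unfolding TT_def by (rule n_subsets[OF fball])
      then show "real (card (TT r)) \<le> real (card (ball r)) ^ L" using choose_le_pow_real by simp
      show "0 \<le> real (card Codes) * (real M / real Q) ^ L" by simp
    qed
    also have "\<dots> = real (card Codes) * (real (card (ball r)) * (real M / real Q)) ^ L"
      unfolding power_mult_distrib by (simp only: ac_simps)
    also have "\<dots> \<le> real (card Codes) * \<rho> ^ L"
    proof (rule mult_left_mono)
      have cb: "real (card (ball r)) \<le> (real n + 1) * exp (real n * E)"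
        unfolding ball_def W_def E_def using ball_bound[OF q3 g0 k0 kq an bn rq] by simp
      have MQr: "real M / real Q \<le> exp (real n * (Lq - E - \<epsilon> * Lq)) / exp (real n * Lq)"
        using Mle Qexp by (simp add: divide_right_mono)
      have "real (card (ball r)) * (real M / real Q)
          \<le> ((real n + 1) * exp (real n * E)) * (exp (real n * (Lq - E - \<epsilon> * Lq)) / exp (real n * Lq))"
        using cb MQr by (intro mult_mono) auto
      also have "\<dots> = (real n + 1) * exp (- (real n * (\<epsilon> * Lq)))"
        by (simp add: exp_add[symmetric] exp_diff[symmetric] algebra_simps)
      also have "\<dots> \<le> exp (real n * (\<epsilon> * Lq / 2)) * exp (- (real n * (\<epsilon> * Lq)))"
        using lin unfolding Lq_def by (intro mult_right_mono) auto
      also have "\<dots> = \<rho>" unfolding \<rho>_def by (simp add: exp_add[symmetric] algebra_simps)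
      finally have "real (card (ball r)) * (real M / real Q) \<le> \<rho>" .
      then show "(real (card (ball r)) * (real M / real Q)) ^ L \<le> \<rho> ^ L" by (intro power_mono) auto
      show "0 \<le> real (card Codes)" by simp
    qed
    finally show ?thesis .
  qed
  have "real (card Bad) \<le> (\<Sum>r\<in>Rs. real (card Codes) * \<rho> ^ L)"
    using B1 B2 sum_mono[of Rs] by (meson order_trans)
  also have "\<dots> = real (card Rs) * real (card Codes) * \<rho> ^ L" by simp
  also have "\<dots> \<le> real (card Codes) * real q powr (- real n)"
  proof -
    have rhoL: "\<rho> ^ L = exp (- (real L * \<epsilon>) * (real n * Lq / 2))" unfolding \<rho>_def
      by (simp add: exp_of_nat_mult[symmetric] algebra_simps)
    have "Kc < real L * \<epsilon>" using KL e0 by (simp add: field_simps)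
    then have "- (real L * \<epsilon>) * (real n * Lq / 2) \<le> - Kc * (real n * Lq / 2)"
      using Lq0 by (intro mult_right_mono) auto
    then have r1: "\<rho> ^ L \<le> exp (- Kc * (real n * Lq / 2))" unfolding rhoL by simp
    have "real (card Rs) \<le> real q ^ Suc (n + a)" using cRs by (metis of_nat_le_iff of_nat_power)
    also have "\<dots> = exp (real (Suc (n + a)) * Lq)" unfolding Lq_def by (rule pow_exp) (use q0 in simp)
    also have "\<dots> \<le> exp ((real n + \<gamma> * real n + 1) * Lq)"
    proof -
      have "real (Suc (n + a)) \<le> real n + \<gamma> * real n + 1" using an by simp
      then have "real (Suc (n + a)) * Lq \<le> (real n + \<gamma> * real n + 1) * Lq" using Lq0 by (intro mult_right_mono) auto
      then show ?thesis by simp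
    qed
    finally have r2: "real (card Rs) \<le> exp ((real n + \<gamma> * real n + 1) * Lq)" .
    have "real (card Rs) * \<rho> ^ L \<le> exp ((real n + \<gamma> * real n + 1) * Lq) * exp (- Kc * (real n * Lq / 2))"
      using r1 r2 rho0 by (intro mult_mono) auto
    also have "\<dots> = exp ((1 - 2 * real n) * Lq)" unfolding Kc by (simp add: exp_add[symmetric] algebra_simps)
    also have "\<dots> \<le> exp (- real n * Lq)"
    proof -
      have "(1 - 2 * real n) * Lq \<le> (- real n) * Lq" using n1 Lq0 by (intro mult_right_mono) auto
      then show ?thesis by simp
    qed
    also have "\<dots> = real q powr (- real n)" unfolding powr_def Lq_def using q0 by simp
    finally have "real (card Rs) * \<rho> ^ L \<le> real q powr (- real n)" .
    then have "real (card Codes) * (real (card Rs) * \<rho> ^ L) \<le> real (card Codes) * real q powr (- real n)"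
      by (intro mult_left_mono) auto
    then show ?thesis by (simp add: algebra_simps)
  qed
  finally have bad: "real (card Bad) \<le> real (card Codes) * real q powr (- real n)" .
  have "{C \<in> Codes. P C} = Codes - Bad" unfolding Bad_def by auto
  then have "card {C \<in> Codes. P C} = card Codes - card Bad" using fCodes unfolding Bad_def
    by (simp add: card_Diff_subset)
  moreover have "card Bad \<le> card Codes" using fCodes unfolding Bad_def by (intro card_mono) auto
  ultimately have "real (card {C \<in> Codes. P C}) = real (card Codes) - real (card Bad)" by simp
  then have "prob_random_code q n R P = 1 - real (card Bad) / real (card Codes)"
    unfolding prob_random_code_def Codes_eq using cC0 by (simp add: field_simps)
  moreover have "real (card Bad) / real (card Codes) \<le> real q powr (- real n)"
    using bad cC0 by (simp add: field_simps)
  ultimately show ?thesis unfolding R_def P_def by simp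
qed




theorem mainTheorem2:
  fixes q :: nat and \<gamma> \<kappa> :: real
  assumes "q \<ge> 3"
    and "0 \<le> \<gamma>" and "\<gamma> < real q - 1"
    and "0 \<le> \<kappa>" and "\<kappa> < (real q - 1) / real q"
  shows "\<exists>K > 0. \<exists>\<epsilon>0 > 0. \<epsilon>0 \<le> 1 \<and>
           (\<forall>\<epsilon>. 0 < \<epsilon> \<and> \<epsilon> < \<epsilon>0 \<longrightarrow>
              (\<exists>N. \<forall>n \<ge> N.
                 prob_random_code q n (insdel_rate q \<gamma> \<kappa> \<epsilon>)
                   (list_decodable_insdel q n \<gamma> \<kappa> (K / \<epsilon>))
                 \<ge> 1 - real q powr (- real n)))"
proof -
  have main: "\<forall>\<epsilon>. 0 < \<epsilon> \<and> \<epsilon> < 1 \<longrightarrow> (\<exists>N. \<forall>n \<ge> N. prob_random_code q n (insdel_rate q \<gamma> \<kappa> \<epsilon>)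
                   (list_decodable_insdel q n \<gamma> \<kappa> (2 * (\<gamma> + 3) / \<epsilon>))
                 \<ge> 1 - real q powr (- real n))"
  proof (intro allI impI)
    fix \<epsilon> :: real assume e: "0 < \<epsilon> \<and> \<epsilon> < 1"
    have c0: "\<epsilon> * ln (real q) / 2 > 0" using e assms by simp
    obtain N0 where N0: "\<forall>n\<ge>N0. real n + 1 \<le> exp (real n * (\<epsilon> * ln (real q) / 2))"
      using eventually_lin_exp[OF c0] by blast
    show "\<exists>N. \<forall>n \<ge> N. prob_random_code q n (insdel_rate q \<gamma> \<kappa> \<epsilon>)
                   (list_decodable_insdel q n \<gamma> \<kappa> (2 * (\<gamma> + 3) / \<epsilon>))
                 \<ge> 1 - real q powr (- real n)"
    proof (intro exI[of _ "max N0 1"] allI impI)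
      fix n assume n: "max N0 1 \<le> n"
      show "prob_random_code q n (insdel_rate q \<gamma> \<kappa> \<epsilon>)
                   (list_decodable_insdel q n \<gamma> \<kappa> (2 * (\<gamma> + 3) / \<epsilon>))
                 \<ge> 1 - real q powr (- real n)"
        using prob_bound[OF assms(1) assms(2) assms(4) assms(5), of \<epsilon> n "2 * (\<gamma> + 3)"] e n N0 by simp
    qed
  qed
  have K0: "2 * (\<gamma> + 3) > 0" using assms by simp
  show ?thesis
  proof (rule exI[of _ "2 * (\<gamma> + 3)"], rule conjI[OF K0])
    show "\<exists>\<epsilon>0 > 0. \<epsilon>0 \<le> 1 \<and>
           (\<forall>\<epsilon>. 0 < \<epsilon> \<and> \<epsilon> < \<epsilon>0 \<longrightarrow>
              (\<exists>N. \<forall>n \<ge> N.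
                 prob_random_code q n (insdel_rate q \<gamma> \<kappa> \<epsilon>)
                   (list_decodable_insdel q n \<gamma> \<kappa> (2 * (\<gamma> + 3) / \<epsilon>))
                 \<ge> 1 - real q powr (- real n)))"
      by (rule exI[of _ 1]) (use main in simp)
  qed
qed


end
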